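(* Let $K$ be a field, $\kappa$ an infinite cardinal, $\mathcal R=(R_\alpha\mid\alpha<\kappa)$ a sequence of $K$-algebras, $P=\prod_{\alpha<\kappa}R_\alpha$ and $I=\bigoplus_{\alpha<\kappa}R_\alpha$. Let $R$ be a $K$-algebra containing an ideal $J$ which is isomorphic to $I$ as a $K$-algebra without unit, and assume there is a $K$-algebra isomorphism $R/J\cong K$. Then the $K$-algebras $R$ and $R(\kappa,K,\mathcal R)$ are isomorphic.
   Context: $R(\kappa,K,\mathcal R)$ denotes the $K$-subalgebra $I\oplus 1_P\cdot K$ of $P=\prod_{\alpha<\kappa}R_\alpha$, where $I=\bigoplus_{\alpha<\kappa}R_\alpha$. *)

theory Defs
  imports "HOL-Algebra.Algebra" "HOL-Library.FuncSet"
begin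

definition k_algebra :: "('k, 'm) ring_scheme \<Rightarrow> ('k, 'a) module \<Rightarrow> bool" where
  "k_algebra K M \<longleftrightarrow> field K \<and> ring M \<and> module K M \<and>
     (\<forall>a\<in>carrier K. \<forall>x\<in>carrier M. \<forall>y\<in>carrier M.
        (a \<odot>\<^bsub>M\<^esub> x) \<otimes>\<^bsub>M\<^esub> y = a \<odot>\<^bsub>M\<^esub> (x \<otimes>\<^bsub>M\<^esub> y) \<and>
        x \<otimes>\<^bsub>M\<^esub> (a \<odot>\<^bsub>M\<^esub> y) = a \<odot>\<^bsub>M\<^esub> (x \<otimes>\<^bsub>M\<^esub> y))"

definition alg_iso :: "('k, 'm) ring_scheme \<Rightarrow> ('k, 'a) module \<Rightarrow> ('k, 'b) module \<Rightarrow> ('a \<Rightarrow> 'b) set" where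
  "alg_iso K M N = {h. h \<in> ring_iso M N \<and>
     (\<forall>a\<in>carrier K. \<forall>x\<in>carrier M. h (a \<odot>\<^bsub>M\<^esub> x) = a \<odot>\<^bsub>N\<^esub> h x)}"

text \<open>Isomorphism of K-algebras without unit between subsets S of M and T of N
  (each carrying the operations of the ambient algebra).\<close>
definition nonunital_alg_iso ::
  "('k, 'm) ring_scheme \<Rightarrow> ('k, 'a) module \<Rightarrow> 'a set \<Rightarrow> ('k, 'b) module \<Rightarrow> 'b set \<Rightarrow> ('a \<Rightarrow> 'b) set" where
  "nonunital_alg_iso K M S N T = {h. bij_betw h S T \<and>
     (\<forall>x\<in>S. \<forall>y\<in>S. h (x \<oplus>\<^bsub>M\<^esub> y) = h x \<oplus>\<^bsub>N\<^esub> h y \<and>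
                   h (x \<otimes>\<^bsub>M\<^esub> y) = h x \<otimes>\<^bsub>N\<^esub> h y) \<and>
     (\<forall>a\<in>carrier K. \<forall>x\<in>S. h (a \<odot>\<^bsub>M\<^esub> x) = a \<odot>\<^bsub>N\<^esub> h x)}"

definition field_alg :: "('k, 'm) ring_scheme \<Rightarrow> ('k, 'k) module" where
  "field_alg K = \<lparr>carrier = carrier K, monoid.mult = monoid.mult K, one = one K,
     ring.zero = ring.zero K, ring.add = ring.add K, smult = monoid.mult K\<rparr>"

definition quot_alg :: "('k, 'm) ring_scheme \<Rightarrow> ('k, 'a) module \<Rightarrow> 'a set \<Rightarrow> ('k, 'a set) module" where
  "quot_alg K M J = \<lparr>carrier = carrier (M Quot J), monoid.mult = monoid.mult (M Quot J),
     one = one (M Quot J), ring.zero = ring.zero (M Quot J), ring.add = ring.add (M Quot J),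
     smult = (\<lambda>c Y. \<Union>y\<in>Y. a_r_coset M J (c \<odot>\<^bsub>M\<^esub> y))\<rparr>"

definition prod_alg :: "('k, 'm) ring_scheme \<Rightarrow> 'i set \<Rightarrow> ('i \<Rightarrow> ('k, 'a) module) \<Rightarrow> ('k, 'i \<Rightarrow> 'a) module" where
  "prod_alg K A Rs = \<lparr>carrier = (\<Pi>\<^sub>E \<alpha>\<in>A. carrier (Rs \<alpha>)),
     monoid.mult = (\<lambda>f g. \<lambda>\<alpha>\<in>A. f \<alpha> \<otimes>\<^bsub>Rs \<alpha>\<^esub> g \<alpha>),
     one = (\<lambda>\<alpha>\<in>A. \<one>\<^bsub>Rs \<alpha>\<^esub>),
     ring.zero = (\<lambda>\<alpha>\<in>A. \<zero>\<^bsub>Rs \<alpha>\<^esub>),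
     ring.add = (\<lambda>f g. \<lambda>\<alpha>\<in>A. f \<alpha> \<oplus>\<^bsub>Rs \<alpha>\<^esub> g \<alpha>),
     smult = (\<lambda>a f. \<lambda>\<alpha>\<in>A. a \<odot>\<^bsub>Rs \<alpha>\<^esub> f \<alpha>)\<rparr>"

definition dsum_set :: "'i set \<Rightarrow> ('i \<Rightarrow> ('k, 'a) module) \<Rightarrow> ('i \<Rightarrow> 'a) set" where
  "dsum_set A Rs = {f \<in> (\<Pi>\<^sub>E \<alpha>\<in>A. carrier (Rs \<alpha>)). finite {\<alpha>\<in>A. f \<alpha> \<noteq> \<zero>\<^bsub>Rs \<alpha>\<^esub>}}"

text \<open>R(\<kappa>,K,R) = I \<oplus> 1_P \<cdot> K, the K-subalgebra of P.\<close>
definition R_alg :: "('k, 'm) ring_scheme \<Rightarrow> 'i set \<Rightarrow> ('i \<Rightarrow> ('k, 'a) module) \<Rightarrow> ('k, 'i \<Rightarrow> 'a) module" where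
  "R_alg K A Rs = (prod_alg K A Rs)\<lparr>carrier :=
     {f \<oplus>\<^bsub>prod_alg K A Rs\<^esub> (c \<odot>\<^bsub>prod_alg K A Rs\<^esub> \<one>\<^bsub>prod_alg K A Rs\<^esub>) | f c.
        f \<in> dsum_set A Rs \<and> c \<in> carrier K}\<rparr>"

end

theory Submission imports Defs begin

lemma kalg_ring: "k_algebra K M \<Longrightarrow> ring M" by (simp add: k_algebra_def)
lemma kalg_module: "k_algebra K M \<Longrightarrow> module K M" by (simp add: k_algebra_def)
lemma kalg_field: "k_algebra K M \<Longrightarrow> field K" by (simp add: k_algebra_def)
lemma kalg_assoc2:
  "k_algebra K M \<Longrightarrow> a \<in> carrier K \<Longrightarrow> x \<in> carrier M \<Longrightarrow> y \<in> carrier M \<Longrightarrow>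
    (a \<odot>\<^bsub>M\<^esub> x) \<otimes>\<^bsub>M\<^esub> y = a \<odot>\<^bsub>M\<^esub> (x \<otimes>\<^bsub>M\<^esub> y)"
  by (simp add: k_algebra_def)
lemma kalg_assoc3:
  "k_algebra K M \<Longrightarrow> a \<in> carrier K \<Longrightarrow> x \<in> carrier M \<Longrightarrow> y \<in> carrier M \<Longrightarrow>
    x \<otimes>\<^bsub>M\<^esub> (a \<odot>\<^bsub>M\<^esub> y) = a \<odot>\<^bsub>M\<^esub> (x \<otimes>\<^bsub>M\<^esub> y)"
  by (simp add: k_algebra_def)

lemma L1:
  assumes alg: "k_algebra K M" and x: "x \<in> carrier M" and y: "y \<in> carrier M"
    and c: "c \<in> carrier K" and d: "d \<in> carrier K"
  shows "(x \<oplus>\<^bsub>M\<^esub> c \<odot>\<^bsub>M\<^esub> \<one>\<^bsub>M\<^esub>) \<otimes>\<^bsub>M\<^esub> (y \<oplus>\<^bsub>M\<^esub> d \<odot>\<^bsub>M\<^esub> \<one>\<^bsub>M\<^esub>)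
       = ((x \<otimes>\<^bsub>M\<^esub> y \<oplus>\<^bsub>M\<^esub> d \<odot>\<^bsub>M\<^esub> x) \<oplus>\<^bsub>M\<^esub> c \<odot>\<^bsub>M\<^esub> y) \<oplus>\<^bsub>M\<^esub> (c \<otimes>\<^bsub>K\<^esub> d) \<odot>\<^bsub>M\<^esub> \<one>\<^bsub>M\<^esub>"
proof -
  interpret M: ring M using kalg_ring[OF alg] .
  interpret KM: module K M using kalg_module[OF alg] .
  have e1: "x \<otimes>\<^bsub>M\<^esub> (d \<odot>\<^bsub>M\<^esub> \<one>\<^bsub>M\<^esub>) = d \<odot>\<^bsub>M\<^esub> x"
    using kalg_assoc3[OF alg d x M.one_closed] x by simp
  have e2: "(c \<odot>\<^bsub>M\<^esub> \<one>\<^bsub>M\<^esub>) \<otimes>\<^bsub>M\<^esub> y = c \<odot>\<^bsub>M\<^esub> y"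
    using kalg_assoc2[OF alg c M.one_closed y] y by simp
  have e3: "(c \<odot>\<^bsub>M\<^esub> \<one>\<^bsub>M\<^esub>) \<otimes>\<^bsub>M\<^esub> (d \<odot>\<^bsub>M\<^esub> \<one>\<^bsub>M\<^esub>) = (c \<otimes>\<^bsub>K\<^esub> d) \<odot>\<^bsub>M\<^esub> \<one>\<^bsub>M\<^esub>"
    using kalg_assoc2[OF alg c M.one_closed, of "d \<odot>\<^bsub>M\<^esub> \<one>\<^bsub>M\<^esub>"] KM.smult_assoc1[OF c d M.one_closed] d by simp
  show ?thesis
    using x y c d by (simp add: M.l_distr M.r_distr e1 e2 e3 M.a_ac)
qed

lemma L2:
  assumes alg: "k_algebra K M" and x: "x \<in> carrier M" and y: "y \<in> carrier M"
    and c: "c \<in> carrier K" and d: "d \<in> carrier K"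
  shows "(x \<oplus>\<^bsub>M\<^esub> c \<odot>\<^bsub>M\<^esub> \<one>\<^bsub>M\<^esub>) \<oplus>\<^bsub>M\<^esub> (y \<oplus>\<^bsub>M\<^esub> d \<odot>\<^bsub>M\<^esub> \<one>\<^bsub>M\<^esub>)
       = (x \<oplus>\<^bsub>M\<^esub> y) \<oplus>\<^bsub>M\<^esub> (c \<oplus>\<^bsub>K\<^esub> d) \<odot>\<^bsub>M\<^esub> \<one>\<^bsub>M\<^esub>"
proof -
  interpret M: ring M using kalg_ring[OF alg] .
  interpret KM: module K M using kalg_module[OF alg] .
  show ?thesis
    using x y c d by (simp add: KM.smult_l_distr M.a_ac)
qed

lemma L3:
  assumes alg: "k_algebra K M" and x: "x \<in> carrier M"
    and c: "c \<in> carrier K" and a: "a \<in> carrier K"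
  shows "a \<odot>\<^bsub>M\<^esub> (x \<oplus>\<^bsub>M\<^esub> c \<odot>\<^bsub>M\<^esub> \<one>\<^bsub>M\<^esub>)
       = a \<odot>\<^bsub>M\<^esub> x \<oplus>\<^bsub>M\<^esub> (a \<otimes>\<^bsub>K\<^esub> c) \<odot>\<^bsub>M\<^esub> \<one>\<^bsub>M\<^esub>"
proof -
  interpret M: ring M using kalg_ring[OF alg] .
  interpret KM: module K M using kalg_module[OF alg] .
  show ?thesis
    using x c a by (simp add: KM.smult_r_distr KM.smult_assoc1)
qed

lemma smult_cancel:
  assumes alg: "k_algebra K M" and x: "x \<in> carrier M" "x \<noteq> \<zero>\<^bsub>M\<^esub>"
    and c: "c \<in> carrier K" and d: "d \<in> carrier K"
    and eq: "c \<odot>\<^bsub>M\<^esub> x = d \<odot>\<^bsub>M\<^esub> x"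
  shows "c = d"
proof (rule ccontr)
  assume ne: "c \<noteq> d"
  interpret K: field K using kalg_field[OF alg] .
  interpret M: ring M using kalg_ring[OF alg] .
  interpret KM: module K M using kalg_module[OF alg] .
  define e where "e = c \<oplus>\<^bsub>K\<^esub> \<ominus>\<^bsub>K\<^esub> d"
  have ek: "e \<in> carrier K" using c d e_def by simp
  have e0: "e \<noteq> \<zero>\<^bsub>K\<^esub>" using ne c d e_def K.r_neg1 
    by (metis K.add.inv_closed K.minus_equality K.r_neg)
  have "e \<odot>\<^bsub>M\<^esub> x = \<zero>\<^bsub>M\<^esub>"
    using c d x eq by (simp add: e_def KM.smult_l_distr KM.smult_l_minus M.r_neg)
  moreover have "inv\<^bsub>K\<^esub> e \<otimes>\<^bsub>K\<^esub> e = \<one>\<^bsub>K\<^esub>" using ek e0 K.field_Units by (simp add: K.Units_l_inv)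
  moreover have "inv\<^bsub>K\<^esub> e \<in> carrier K" using ek e0 K.field_Units by simp
  ultimately have "x = inv\<^bsub>K\<^esub> e \<odot>\<^bsub>M\<^esub> \<zero>\<^bsub>M\<^esub>"
    using KM.smult_assoc1[of "inv\<^bsub>K\<^esub> e" e x] ek x by simp
  then show False using x \<open>inv\<^bsub>K\<^esub> e \<in> carrier K\<close> by simp
qed

lemma kalg_simps:
  assumes alg: "k_algebra K M"
  shows "\<one>\<^bsub>M\<^esub> \<in> carrier M" "\<zero>\<^bsub>M\<^esub> \<in> carrier M"
    "\<And>c x. c \<in> carrier K \<Longrightarrow> x \<in> carrier M \<Longrightarrow> c \<odot>\<^bsub>M\<^esub> x \<in> carrier M"
    "\<And>x. x \<in> carrier M \<Longrightarrow> \<zero>\<^bsub>M\<^esub> \<oplus>\<^bsub>M\<^esub> x = x"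
    "\<And>x. x \<in> carrier M \<Longrightarrow> \<one>\<^bsub>K\<^esub> \<odot>\<^bsub>M\<^esub> x = x"
    "\<And>x y z. x \<in> carrier M \<Longrightarrow> y \<in> carrier M \<Longrightarrow> z \<in> carrier M \<Longrightarrow>
        (x \<oplus>\<^bsub>M\<^esub> z = y \<oplus>\<^bsub>M\<^esub> z) = (x = y)"
proof -
  interpret M: ring M using kalg_ring[OF alg] .
  interpret KM: module K M using kalg_module[OF alg] .
  show "\<one>\<^bsub>M\<^esub> \<in> carrier M" "\<zero>\<^bsub>M\<^esub> \<in> carrier M" by simp_all
  show "\<And>c x. c \<in> carrier K \<Longrightarrow> x \<in> carrier M \<Longrightarrow> c \<odot>\<^bsub>M\<^esub> x \<in> carrier M" by simp
  show "\<And>x. x \<in> carrier M \<Longrightarrow> \<zero>\<^bsub>M\<^esub> \<oplus>\<^bsub>M\<^esub> x = x" by simp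
  show "\<And>x. x \<in> carrier M \<Longrightarrow> \<one>\<^bsub>K\<^esub> \<odot>\<^bsub>M\<^esub> x = x" by simp
  show "\<And>x y z. x \<in> carrier M \<Longrightarrow> y \<in> carrier M \<Longrightarrow> z \<in> carrier M \<Longrightarrow>
        (x \<oplus>\<^bsub>M\<^esub> z = y \<oplus>\<^bsub>M\<^esub> z) = (x = y)" by simp
qed

theorem lemma4p5:
  fixes K :: "('k, 'm) ring_scheme"
    and A :: "'i set"
    and Rs :: "'i \<Rightarrow> ('k, 'a) module"
    and R :: "('k, 'b) module"
    and J :: "'b set"
  assumes "field K"
    and "infinite A"
    and "\<And>\<alpha>. \<alpha> \<in> A \<Longrightarrow> k_algebra K (Rs \<alpha>)"
    and "\<And>\<alpha>. \<alpha> \<in> A \<Longrightarrow> \<one>\<^bsub>Rs \<alpha>\<^esub> \<noteq> \<zero>\<^bsub>Rs \<alpha>\<^esub>"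
    and "k_algebra K R"
    and "ideal J R"
    and "nonunital_alg_iso K R J (prod_alg K A Rs) (dsum_set A Rs) \<noteq> {}"
    and "alg_iso K (quot_alg K R J) (field_alg K) \<noteq> {}"
  shows "alg_iso K R (R_alg K A Rs) \<noteq> {}"
proof -
  let ?P = "prod_alg K A Rs" and ?I = "dsum_set A Rs" and ?Q = "quot_alg K R J" and ?F = "field_alg K"
  interpret KF: field K by fact
  interpret Rr: ring R using kalg_ring[OF assms(5)] .
  interpret RM: module K R using kalg_module[OF assms(5)] .
  interpret Jid: ideal J R by fact
  obtain h where h: "h \<in> nonunital_alg_iso K R J ?P ?I" using assms(7) by blast
  obtain \<psi> where phi: "\<psi> \<in> alg_iso K ?Q ?F" using assms(8) by blast
  have hbij: "bij_betw h J ?I"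
    and hadd: "\<And>x y. x \<in> J \<Longrightarrow> y \<in> J \<Longrightarrow> h (x \<oplus>\<^bsub>R\<^esub> y) = h x \<oplus>\<^bsub>?P\<^esub> h y"
    and hmul: "\<And>x y. x \<in> J \<Longrightarrow> y \<in> J \<Longrightarrow> h (x \<otimes>\<^bsub>R\<^esub> y) = h x \<otimes>\<^bsub>?P\<^esub> h y"
    and hsm: "\<And>a x. a \<in> carrier K \<Longrightarrow> x \<in> J \<Longrightarrow> h (a \<odot>\<^bsub>R\<^esub> x) = a \<odot>\<^bsub>?P\<^esub> h x"
    using h unfolding nonunital_alg_iso_def by auto
  have phihom: "\<psi> \<in> ring_hom ?Q ?F" and phibij: "bij_betw \<psi> (carrier ?Q) (carrier ?F)"
    and phism: "\<And>a Z. a \<in> carrier K \<Longrightarrow> Z \<in> carrier ?Q \<Longrightarrow> \<psi> (a \<odot>\<^bsub>?Q\<^esub> Z) = a \<odot>\<^bsub>?F\<^esub> \<psi> Z"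
    using phi unfolding alg_iso_def ring_iso_def by auto
  have carrQ: "carrier ?Q = a_rcosets\<^bsub>R\<^esub> J" by (simp add: quot_alg_def FactRing_def)
  have oneQ: "one ?Q = J +>\<^bsub>R\<^esub> \<one>\<^bsub>R\<^esub>" by (simp add: quot_alg_def FactRing_def)
  have smQ: "\<And>c Z. c \<odot>\<^bsub>?Q\<^esub> Z = (\<Union>y\<in>Z. J +>\<^bsub>R\<^esub> (c \<odot>\<^bsub>R\<^esub> y))" by (simp add: quot_alg_def)
  have carrF: "carrier ?F = carrier K" by (simp add: field_alg_def)
  have smF: "\<And>c x. c \<odot>\<^bsub>?F\<^esub> x = c \<otimes>\<^bsub>K\<^esub> x" by (simp add: field_alg_def)
  have oneF: "one ?F = \<one>\<^bsub>K\<^esub>" by (simp add: field_alg_def)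
  have phi1: "\<psi> (J +>\<^bsub>R\<^esub> \<one>\<^bsub>R\<^esub>) = \<one>\<^bsub>K\<^esub>" using phihom oneQ oneF unfolding ring_hom_def by simp
  have Jsub: "J \<subseteq> carrier R" by (rule Jid.a_subset)
  have Jsg: "subgroup J (add_monoid R)" by (rule Jid.a_subgroup)
  have smJ: "c \<odot>\<^bsub>R\<^esub> j \<in> J" if c: "c \<in> carrier K" and j: "j \<in> J" for c j
  proof -
    have jc: "j \<in> carrier R" using j Jsub by auto
    have "c \<odot>\<^bsub>R\<^esub> j = (c \<odot>\<^bsub>R\<^esub> \<one>\<^bsub>R\<^esub>) \<otimes>\<^bsub>R\<^esub> j"
      using kalg_assoc2[OF assms(5) c Rr.one_closed jc] jc by simp
    then show ?thesis using Jid.I_l_closed[OF j] c by simp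
  qed
  have KL0: "\<psi> (J +>\<^bsub>R\<^esub> (c \<odot>\<^bsub>R\<^esub> \<one>\<^bsub>R\<^esub>)) = c" if c: "c \<in> carrier K" for c
  proof -
    have "c \<odot>\<^bsub>?Q\<^esub> (J +>\<^bsub>R\<^esub> \<one>\<^bsub>R\<^esub>) = J +>\<^bsub>R\<^esub> (c \<odot>\<^bsub>R\<^esub> \<one>\<^bsub>R\<^esub>)"
    proof
      show "c \<odot>\<^bsub>?Q\<^esub> (J +>\<^bsub>R\<^esub> \<one>\<^bsub>R\<^esub>) \<subseteq> J +>\<^bsub>R\<^esub> (c \<odot>\<^bsub>R\<^esub> \<one>\<^bsub>R\<^esub>)"
      proof
        fix z assume "z \<in> c \<odot>\<^bsub>?Q\<^esub> (J +>\<^bsub>R\<^esub> \<one>\<^bsub>R\<^esub>)"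
        then obtain y where y: "y \<in> J +>\<^bsub>R\<^esub> \<one>\<^bsub>R\<^esub>" "z \<in> J +>\<^bsub>R\<^esub> (c \<odot>\<^bsub>R\<^esub> y)" by (auto simp: smQ)
        from y obtain j where j: "j \<in> J" "y = j \<oplus>\<^bsub>R\<^esub> \<one>\<^bsub>R\<^esub>" by (auto simp: a_r_coset_def')
        have jc: "j \<in> carrier R" using j Jsub by auto
        have "c \<odot>\<^bsub>R\<^esub> y = c \<odot>\<^bsub>R\<^esub> j \<oplus>\<^bsub>R\<^esub> c \<odot>\<^bsub>R\<^esub> \<one>\<^bsub>R\<^esub>"
          using j jc c by (simp add: RM.smult_r_distr)
        then have "c \<odot>\<^bsub>R\<^esub> y \<in> J +>\<^bsub>R\<^esub> (c \<odot>\<^bsub>R\<^esub> \<one>\<^bsub>R\<^esub>)"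
          using Rr.a_rcosI[OF smJ[OF c j(1)] Jsub] c by simp
        then have "J +>\<^bsub>R\<^esub> (c \<odot>\<^bsub>R\<^esub> \<one>\<^bsub>R\<^esub>) = J +>\<^bsub>R\<^esub> (c \<odot>\<^bsub>R\<^esub> y)"
          using Rr.a_repr_independence[OF _ _ Jsg] c by simp
        then show "z \<in> J +>\<^bsub>R\<^esub> (c \<odot>\<^bsub>R\<^esub> \<one>\<^bsub>R\<^esub>)" using y by simp
      qed
    next
      have "\<one>\<^bsub>R\<^esub> \<in> J +>\<^bsub>R\<^esub> \<one>\<^bsub>R\<^esub>"
        using Rr.a_rcosI[OF Jid.zero_closed Jsub Rr.one_closed] by simp
      then show "J +>\<^bsub>R\<^esub> (c \<odot>\<^bsub>R\<^esub> \<one>\<^bsub>R\<^esub>) \<subseteq> c \<odot>\<^bsub>?Q\<^esub> (J +>\<^bsub>R\<^esub> \<one>\<^bsub>R\<^esub>)"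
        by (auto simp: smQ)
    qed
    moreover have "J +>\<^bsub>R\<^esub> \<one>\<^bsub>R\<^esub> \<in> carrier ?Q"
      using carrQ Rr.a_rcosetsI[OF Jsub Rr.one_closed] by simp
    ultimately have "\<psi> (J +>\<^bsub>R\<^esub> (c \<odot>\<^bsub>R\<^esub> \<one>\<^bsub>R\<^esub>)) = c \<otimes>\<^bsub>K\<^esub> \<psi> (J +>\<^bsub>R\<^esub> \<one>\<^bsub>R\<^esub>)"
      using phism[OF c] smF by metis
    then show ?thesis using phi1 c by simp
  qed
  have KL: "\<psi> (J +>\<^bsub>R\<^esub> (j \<oplus>\<^bsub>R\<^esub> c \<odot>\<^bsub>R\<^esub> \<one>\<^bsub>R\<^esub>)) = c" if j: "j \<in> J" and c: "c \<in> carrier K" for j c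
  proof -
    have "j \<oplus>\<^bsub>R\<^esub> c \<odot>\<^bsub>R\<^esub> \<one>\<^bsub>R\<^esub> \<in> J +>\<^bsub>R\<^esub> (c \<odot>\<^bsub>R\<^esub> \<one>\<^bsub>R\<^esub>)"
      using Rr.a_rcosI[OF j Jsub] c by simp
    then have "J +>\<^bsub>R\<^esub> (c \<odot>\<^bsub>R\<^esub> \<one>\<^bsub>R\<^esub>) = J +>\<^bsub>R\<^esub> (j \<oplus>\<^bsub>R\<^esub> c \<odot>\<^bsub>R\<^esub> \<one>\<^bsub>R\<^esub>)"
      using Rr.a_repr_independence[OF _ _ Jsg] c by simp
    then show ?thesis using KL0[OF c] by simp
  qed
  have ex: "\<exists>j\<in>J. \<exists>c\<in>carrier K. r = j \<oplus>\<^bsub>R\<^esub> c \<odot>\<^bsub>R\<^esub> \<one>\<^bsub>R\<^esub>" if r: "r \<in> carrier R" for r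
  proof -
    define c where "c = \<psi> (J +>\<^bsub>R\<^esub> r)"
    have XX: "J +>\<^bsub>R\<^esub> r \<in> carrier ?Q" using carrQ Rr.a_rcosetsI[OF Jsub r] by simp
    have c: "c \<in> carrier K" using bij_betw_apply[OF phibij XX] carrF c_def by simp
    have Y: "J +>\<^bsub>R\<^esub> (c \<odot>\<^bsub>R\<^esub> \<one>\<^bsub>R\<^esub>) \<in> carrier ?Q"
      using carrQ Rr.a_rcosetsI[OF Jsub] c by simp
    have "J +>\<^bsub>R\<^esub> (c \<odot>\<^bsub>R\<^esub> \<one>\<^bsub>R\<^esub>) = J +>\<^bsub>R\<^esub> r"
      using inj_onD[OF bij_betw_imp_inj_on[OF phibij] _ Y XX] KL0[OF c] c_def by simp
    moreover have "r \<in> J +>\<^bsub>R\<^esub> r"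
      using Rr.a_rcosI[OF Jid.zero_closed Jsub r] r by simp
    ultimately have "r \<in> J +>\<^bsub>R\<^esub> (c \<odot>\<^bsub>R\<^esub> \<one>\<^bsub>R\<^esub>)" by simp
    then show ?thesis using c by (auto simp: a_r_coset_def')
  qed
  have uniq: "j = j' \<and> c = d"
    if j: "j \<in> J" and c: "c \<in> carrier K" and j': "j' \<in> J" and d: "d \<in> carrier K"
      and eq: "j \<oplus>\<^bsub>R\<^esub> c \<odot>\<^bsub>R\<^esub> \<one>\<^bsub>R\<^esub> = j' \<oplus>\<^bsub>R\<^esub> d \<odot>\<^bsub>R\<^esub> \<one>\<^bsub>R\<^esub>" for j c j' d
  proof -
    have cd: "c = d" using KL[OF j c] KL[OF j' d] eq by simp
    moreover have "j = j'" using eq cd j j' Jsub d by (auto simp: Rr.add.right_cancel)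
    ultimately show ?thesis by simp
  qed
  define dec where "dec r = (SOME p. fst p \<in> J \<and> snd p \<in> carrier K \<and> r = fst p \<oplus>\<^bsub>R\<^esub> snd p \<odot>\<^bsub>R\<^esub> \<one>\<^bsub>R\<^esub>)" for r
  have dec: "dec (j \<oplus>\<^bsub>R\<^esub> c \<odot>\<^bsub>R\<^esub> \<one>\<^bsub>R\<^esub>) = (j, c)" if j: "j \<in> J" and c: "c \<in> carrier K" for j c
  proof -
    let ?p = "dec (j \<oplus>\<^bsub>R\<^esub> c \<odot>\<^bsub>R\<^esub> \<one>\<^bsub>R\<^esub>)"
    have "fst ?p \<in> J \<and> snd ?p \<in> carrier K \<and> j \<oplus>\<^bsub>R\<^esub> c \<odot>\<^bsub>R\<^esub> \<one>\<^bsub>R\<^esub> = fst ?p \<oplus>\<^bsub>R\<^esub> snd ?p \<odot>\<^bsub>R\<^esub> \<one>\<^bsub>R\<^esub>"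
      unfolding dec_def by (rule someI[of _ "(j, c)"]) (use j c in simp)
    then show ?thesis using uniq[OF j c] by (metis prod.collapse)
  qed
  define \<Phi> where "\<Phi> r = h (fst (dec r)) \<oplus>\<^bsub>?P\<^esub> (snd (dec r)) \<odot>\<^bsub>?P\<^esub> \<one>\<^bsub>?P\<^esub>" for r
  have Phidec: "\<Phi> (j \<oplus>\<^bsub>R\<^esub> c \<odot>\<^bsub>R\<^esub> \<one>\<^bsub>R\<^esub>) = h j \<oplus>\<^bsub>?P\<^esub> c \<odot>\<^bsub>?P\<^esub> \<one>\<^bsub>?P\<^esub>"
    if "j \<in> J" "c \<in> carrier K" for j c
    using dec[OF that] by (simp add: \<Phi>_def)
  have hI: "h j \<in> ?I" if "j \<in> J" for j using bij_betw_apply[OF hbij that] .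
  have hPi: "h j \<in> (\<Pi>\<^sub>E \<alpha>\<in>A. carrier (Rs \<alpha>))" if "j \<in> J" for j
    using hI[OF that] by (simp add: dsum_set_def)
  have hPa: "h j \<alpha> \<in> carrier (Rs \<alpha>)" if "j \<in> J" "\<alpha> \<in> A" for j \<alpha>
    using hPi[OF that(1)] that(2) by auto
  have RAc: "carrier (R_alg K A Rs) = {f \<oplus>\<^bsub>?P\<^esub> (c \<odot>\<^bsub>?P\<^esub> \<one>\<^bsub>?P\<^esub>) | f c. f \<in> ?I \<and> c \<in> carrier K}"
    by (simp add: R_alg_def)
  have RAm: "\<And>x y. x \<otimes>\<^bsub>R_alg K A Rs\<^esub> y = x \<otimes>\<^bsub>?P\<^esub> y" by (simp add: R_alg_def)
  have RAa: "\<And>x y. x \<oplus>\<^bsub>R_alg K A Rs\<^esub> y = x \<oplus>\<^bsub>?P\<^esub> y" by (simp add: R_alg_def)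
  have RAo: "\<one>\<^bsub>R_alg K A Rs\<^esub> = \<one>\<^bsub>?P\<^esub>" by (simp add: R_alg_def)
  have RAs: "\<And>a x. a \<odot>\<^bsub>R_alg K A Rs\<^esub> x = a \<odot>\<^bsub>?P\<^esub> x" by (simp add: R_alg_def)
  have Jc: "j \<in> carrier R" if "j \<in> J" for j using that Jsub by auto
  have PW: "h j \<oplus>\<^bsub>?P\<^esub> c \<odot>\<^bsub>?P\<^esub> \<one>\<^bsub>?P\<^esub> = (\<lambda>\<alpha>\<in>A. h j \<alpha> \<oplus>\<^bsub>Rs \<alpha>\<^esub> c \<odot>\<^bsub>Rs \<alpha>\<^esub> \<one>\<^bsub>Rs \<alpha>\<^esub>)"
    if "j \<in> J" for j c
    by (simp add: prod_alg_def) (rule restrict_ext, simp)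
  have Phi_in: "\<Phi> r \<in> carrier (R_alg K A Rs)" if r: "r \<in> carrier R" for r
  proof -
    obtain j c where jc: "j \<in> J" "c \<in> carrier K" "r = j \<oplus>\<^bsub>R\<^esub> c \<odot>\<^bsub>R\<^esub> \<one>\<^bsub>R\<^esub>" using ex[OF r] by blast
    show ?thesis unfolding RAc using jc Phidec[OF jc(1,2)] hI[OF jc(1)] by blast
  qed
  have Phimul: "\<Phi> (x \<otimes>\<^bsub>R\<^esub> y) = \<Phi> x \<otimes>\<^bsub>?P\<^esub> \<Phi> y" if x: "x \<in> carrier R" and y: "y \<in> carrier R" for x y
  proof -
    obtain j c where jc: "j \<in> J" "c \<in> carrier K" "x = j \<oplus>\<^bsub>R\<^esub> c \<odot>\<^bsub>R\<^esub> \<one>\<^bsub>R\<^esub>" using ex[OF x] by blast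
    obtain j' d where jd: "j' \<in> J" "d \<in> carrier K" "y = j' \<oplus>\<^bsub>R\<^esub> d \<odot>\<^bsub>R\<^esub> \<one>\<^bsub>R\<^esub>" using ex[OF y] by blast
    let ?m = "(j \<otimes>\<^bsub>R\<^esub> j' \<oplus>\<^bsub>R\<^esub> d \<odot>\<^bsub>R\<^esub> j) \<oplus>\<^bsub>R\<^esub> c \<odot>\<^bsub>R\<^esub> j'"
    have jj: "j \<otimes>\<^bsub>R\<^esub> j' \<in> J" using Jid.I_r_closed[OF jc(1) Jc[OF jd(1)]] .
    have m: "?m \<in> J" using jj smJ jc jd by (simp add: Jid.a_closed)
    have "x \<otimes>\<^bsub>R\<^esub> y = ?m \<oplus>\<^bsub>R\<^esub> (c \<otimes>\<^bsub>K\<^esub> d) \<odot>\<^bsub>R\<^esub> \<one>\<^bsub>R\<^esub>"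
      using L1[OF assms(5) Jc[OF jc(1)] Jc[OF jd(1)] jc(2) jd(2)] jc jd by simp
    then have "\<Phi> (x \<otimes>\<^bsub>R\<^esub> y) = h ?m \<oplus>\<^bsub>?P\<^esub> (c \<otimes>\<^bsub>K\<^esub> d) \<odot>\<^bsub>?P\<^esub> \<one>\<^bsub>?P\<^esub>"
      using Phidec[OF m] jc jd by simp
    also have "h ?m = (h j \<otimes>\<^bsub>?P\<^esub> h j' \<oplus>\<^bsub>?P\<^esub> d \<odot>\<^bsub>?P\<^esub> h j) \<oplus>\<^bsub>?P\<^esub> c \<odot>\<^bsub>?P\<^esub> h j'"
      using jj smJ jc jd by (simp add: hadd hmul hsm Jid.a_closed)
    also have "(h j \<otimes>\<^bsub>?P\<^esub> h j' \<oplus>\<^bsub>?P\<^esub> d \<odot>\<^bsub>?P\<^esub> h j) \<oplus>\<^bsub>?P\<^esub> c \<odot>\<^bsub>?P\<^esub> h j'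
        \<oplus>\<^bsub>?P\<^esub> (c \<otimes>\<^bsub>K\<^esub> d) \<odot>\<^bsub>?P\<^esub> \<one>\<^bsub>?P\<^esub> = \<Phi> x \<otimes>\<^bsub>?P\<^esub> \<Phi> y"
      unfolding jc(3) jd(3) Phidec[OF jc(1,2)] Phidec[OF jd(1,2)]
      by (simp add: prod_alg_def) (rule restrict_ext, simp add: L1[OF assms(3)] hPa jc jd)
    finally show ?thesis .
  qed
  have Phiadd: "\<Phi> (x \<oplus>\<^bsub>R\<^esub> y) = \<Phi> x \<oplus>\<^bsub>?P\<^esub> \<Phi> y" if x: "x \<in> carrier R" and y: "y \<in> carrier R" for x y
  proof -
    obtain j c where jc: "j \<in> J" "c \<in> carrier K" "x = j \<oplus>\<^bsub>R\<^esub> c \<odot>\<^bsub>R\<^esub> \<one>\<^bsub>R\<^esub>" using ex[OF x] by blast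
    obtain j' d where jd: "j' \<in> J" "d \<in> carrier K" "y = j' \<oplus>\<^bsub>R\<^esub> d \<odot>\<^bsub>R\<^esub> \<one>\<^bsub>R\<^esub>" using ex[OF y] by blast
    have m: "j \<oplus>\<^bsub>R\<^esub> j' \<in> J" using jc jd by (simp add: Jid.a_closed)
    have "x \<oplus>\<^bsub>R\<^esub> y = (j \<oplus>\<^bsub>R\<^esub> j') \<oplus>\<^bsub>R\<^esub> (c \<oplus>\<^bsub>K\<^esub> d) \<odot>\<^bsub>R\<^esub> \<one>\<^bsub>R\<^esub>"
      using L2[OF assms(5) Jc[OF jc(1)] Jc[OF jd(1)] jc(2) jd(2)] jc jd by simp
    then have "\<Phi> (x \<oplus>\<^bsub>R\<^esub> y) = h (j \<oplus>\<^bsub>R\<^esub> j') \<oplus>\<^bsub>?P\<^esub> (c \<oplus>\<^bsub>K\<^esub> d) \<odot>\<^bsub>?P\<^esub> \<one>\<^bsub>?P\<^esub>"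
      using Phidec[OF m] jc jd by simp
    also have "h (j \<oplus>\<^bsub>R\<^esub> j') = h j \<oplus>\<^bsub>?P\<^esub> h j'"
      using jc jd by (simp add: hadd)
    also have "h j \<oplus>\<^bsub>?P\<^esub> h j' \<oplus>\<^bsub>?P\<^esub> (c \<oplus>\<^bsub>K\<^esub> d) \<odot>\<^bsub>?P\<^esub> \<one>\<^bsub>?P\<^esub> = \<Phi> x \<oplus>\<^bsub>?P\<^esub> \<Phi> y"
      unfolding jc(3) jd(3) Phidec[OF jc(1,2)] Phidec[OF jd(1,2)]
      by (simp add: prod_alg_def) (rule restrict_ext, simp add: L2[OF assms(3)] hPa jc jd)
    finally show ?thesis .
  qed
  have Phism: "\<Phi> (a \<odot>\<^bsub>R\<^esub> x) = a \<odot>\<^bsub>?P\<^esub> \<Phi> x" if a: "a \<in> carrier K" and x: "x \<in> carrier R" for a x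
  proof -
    obtain j c where jc: "j \<in> J" "c \<in> carrier K" "x = j \<oplus>\<^bsub>R\<^esub> c \<odot>\<^bsub>R\<^esub> \<one>\<^bsub>R\<^esub>" using ex[OF x] by blast
    have m: "a \<odot>\<^bsub>R\<^esub> j \<in> J" using smJ a jc by simp
    have "a \<odot>\<^bsub>R\<^esub> x = a \<odot>\<^bsub>R\<^esub> j \<oplus>\<^bsub>R\<^esub> (a \<otimes>\<^bsub>K\<^esub> c) \<odot>\<^bsub>R\<^esub> \<one>\<^bsub>R\<^esub>"
      using L3[OF assms(5) Jc[OF jc(1)] jc(2) a] jc by simp
    then have "\<Phi> (a \<odot>\<^bsub>R\<^esub> x) = h (a \<odot>\<^bsub>R\<^esub> j) \<oplus>\<^bsub>?P\<^esub> (a \<otimes>\<^bsub>K\<^esub> c) \<odot>\<^bsub>?P\<^esub> \<one>\<^bsub>?P\<^esub>"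
      using Phidec[OF m] jc a by simp
    also have "h (a \<odot>\<^bsub>R\<^esub> j) = a \<odot>\<^bsub>?P\<^esub> h j"
      using jc a by (simp add: hsm)
    also have "a \<odot>\<^bsub>?P\<^esub> h j \<oplus>\<^bsub>?P\<^esub> (a \<otimes>\<^bsub>K\<^esub> c) \<odot>\<^bsub>?P\<^esub> \<one>\<^bsub>?P\<^esub> = a \<odot>\<^bsub>?P\<^esub> \<Phi> x"
      unfolding jc(3) Phidec[OF jc(1,2)]
      by (simp add: prod_alg_def) (rule restrict_ext, simp add: L3[OF assms(3)] hPa jc a)
    finally show ?thesis .
  qed
  have h0: "h \<zero>\<^bsub>R\<^esub> = \<zero>\<^bsub>?P\<^esub>"
  proof -
    have "h \<zero>\<^bsub>R\<^esub> = h \<zero>\<^bsub>R\<^esub> \<oplus>\<^bsub>?P\<^esub> h \<zero>\<^bsub>R\<^esub>" using hadd[of "\<zero>\<^bsub>R\<^esub>" "\<zero>\<^bsub>R\<^esub>"] by simp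
    then have e: "h \<zero>\<^bsub>R\<^esub> \<alpha> = h \<zero>\<^bsub>R\<^esub> \<alpha> \<oplus>\<^bsub>Rs \<alpha>\<^esub> h \<zero>\<^bsub>R\<^esub> \<alpha>" if "\<alpha> \<in> A" for \<alpha>
    proof -
      have "h \<zero>\<^bsub>R\<^esub> \<alpha> = (h \<zero>\<^bsub>R\<^esub> \<oplus>\<^bsub>?P\<^esub> h \<zero>\<^bsub>R\<^esub>) \<alpha>"
        using \<open>h \<zero>\<^bsub>R\<^esub> = h \<zero>\<^bsub>R\<^esub> \<oplus>\<^bsub>?P\<^esub> h \<zero>\<^bsub>R\<^esub>\<close> by simp
      then show ?thesis using that by (simp add: prod_alg_def)
    qed
    show ?thesis
    proof (rule PiE_ext[OF hPi[OF Jid.zero_closed]])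
      show "\<zero>\<^bsub>?P\<^esub> \<in> (\<Pi>\<^sub>E \<alpha>\<in>A. carrier (Rs \<alpha>))" using kalg_simps(2)[OF assms(3)] by (simp add: prod_alg_def)
      fix \<alpha> assume a: "\<alpha> \<in> A"
      have "\<zero>\<^bsub>Rs \<alpha>\<^esub> \<oplus>\<^bsub>Rs \<alpha>\<^esub> h \<zero>\<^bsub>R\<^esub> \<alpha> = h \<zero>\<^bsub>R\<^esub> \<alpha> \<oplus>\<^bsub>Rs \<alpha>\<^esub> h \<zero>\<^bsub>R\<^esub> \<alpha>"
        using e[OF a] kalg_simps(4)[OF assms(3)[OF a] hPa[OF Jid.zero_closed a]] by simp
      then have "\<zero>\<^bsub>Rs \<alpha>\<^esub> = h \<zero>\<^bsub>R\<^esub> \<alpha>"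
        using kalg_simps(6)[OF assms(3)[OF a] kalg_simps(2)[OF assms(3)[OF a]] hPa[OF Jid.zero_closed a] hPa[OF Jid.zero_closed a]]
        by simp
      then show "h \<zero>\<^bsub>R\<^esub> \<alpha> = \<zero>\<^bsub>?P\<^esub> \<alpha>" using a by (simp add: prod_alg_def)
    qed
  qed
  have Phione: "\<Phi> \<one>\<^bsub>R\<^esub> = \<one>\<^bsub>?P\<^esub>"
  proof -
    have "\<one>\<^bsub>R\<^esub> = \<zero>\<^bsub>R\<^esub> \<oplus>\<^bsub>R\<^esub> \<one>\<^bsub>K\<^esub> \<odot>\<^bsub>R\<^esub> \<one>\<^bsub>R\<^esub>" by simp
    then have "\<Phi> \<one>\<^bsub>R\<^esub> = h \<zero>\<^bsub>R\<^esub> \<oplus>\<^bsub>?P\<^esub> \<one>\<^bsub>K\<^esub> \<odot>\<^bsub>?P\<^esub> \<one>\<^bsub>?P\<^esub>"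
      using Phidec[OF Jid.zero_closed KF.one_closed] by simp
    also have "\<dots> = \<one>\<^bsub>?P\<^esub>"
      unfolding h0
      by (simp add: prod_alg_def) (rule restrict_ext, simp add: kalg_simps[OF assms(3)])
    finally show ?thesis .
  qed
  have Phiinj: "inj_on \<Phi> (carrier R)"
  proof (rule inj_onI)
    fix x y assume x: "x \<in> carrier R" and y: "y \<in> carrier R" and eq: "\<Phi> x = \<Phi> y"
    obtain j c where jc: "j \<in> J" "c \<in> carrier K" "x = j \<oplus>\<^bsub>R\<^esub> c \<odot>\<^bsub>R\<^esub> \<one>\<^bsub>R\<^esub>" using ex[OF x] by blast
    obtain j' d where jd: "j' \<in> J" "d \<in> carrier K" "y = j' \<oplus>\<^bsub>R\<^esub> d \<odot>\<^bsub>R\<^esub> \<one>\<^bsub>R\<^esub>" using ex[OF y] by blast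
    have eqa: "h j \<alpha> \<oplus>\<^bsub>Rs \<alpha>\<^esub> c \<odot>\<^bsub>Rs \<alpha>\<^esub> \<one>\<^bsub>Rs \<alpha>\<^esub> = h j' \<alpha> \<oplus>\<^bsub>Rs \<alpha>\<^esub> d \<odot>\<^bsub>Rs \<alpha>\<^esub> \<one>\<^bsub>Rs \<alpha>\<^esub>"
      if a: "\<alpha> \<in> A" for \<alpha>
    proof -
      have "(\<lambda>\<alpha>\<in>A. h j \<alpha> \<oplus>\<^bsub>Rs \<alpha>\<^esub> c \<odot>\<^bsub>Rs \<alpha>\<^esub> \<one>\<^bsub>Rs \<alpha>\<^esub>) = (\<lambda>\<alpha>\<in>A. h j' \<alpha> \<oplus>\<^bsub>Rs \<alpha>\<^esub> d \<odot>\<^bsub>Rs \<alpha>\<^esub> \<one>\<^bsub>Rs \<alpha>\<^esub>)"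
      proof -
        have "\<Phi> x = (\<lambda>\<alpha>\<in>A. h j \<alpha> \<oplus>\<^bsub>Rs \<alpha>\<^esub> c \<odot>\<^bsub>Rs \<alpha>\<^esub> \<one>\<^bsub>Rs \<alpha>\<^esub>)"
          using Phidec[OF jc(1,2)] PW[OF jc(1)] jc(3) by simp
        moreover have "\<Phi> y = (\<lambda>\<alpha>\<in>A. h j' \<alpha> \<oplus>\<^bsub>Rs \<alpha>\<^esub> d \<odot>\<^bsub>Rs \<alpha>\<^esub> \<one>\<^bsub>Rs \<alpha>\<^esub>)"
          using Phidec[OF jd(1,2)] PW[OF jd(1)] jd(3) by simp
        ultimately show ?thesis using eq by simp
      qed
      from fun_cong[OF this, of \<alpha>] show ?thesis using a by simp
    qed
    let ?S = "{\<alpha>\<in>A. h j \<alpha> \<noteq> \<zero>\<^bsub>Rs \<alpha>\<^esub>} \<union> {\<alpha>\<in>A. h j' \<alpha> \<noteq> \<zero>\<^bsub>Rs \<alpha>\<^esub>}"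
    have "finite ?S" using hI[OF jc(1)] hI[OF jd(1)] by (simp add: dsum_set_def)
    then have "infinite (A - ?S)" using assms(2) by (rule Diff_infinite_finite)
    then have "A - ?S \<noteq> {}" by (rule infinite_imp_nonempty)
    then obtain \<alpha> where a: "\<alpha> \<in> A - ?S" by (meson ex_in_conv)
    then have a1: "\<alpha> \<in> A" and z1: "h j \<alpha> = \<zero>\<^bsub>Rs \<alpha>\<^esub>" and z2: "h j' \<alpha> = \<zero>\<^bsub>Rs \<alpha>\<^esub>" by auto
    have "c \<odot>\<^bsub>Rs \<alpha>\<^esub> \<one>\<^bsub>Rs \<alpha>\<^esub> = d \<odot>\<^bsub>Rs \<alpha>\<^esub> \<one>\<^bsub>Rs \<alpha>\<^esub>"
      using eqa[OF a1] z1 z2 kalg_simps[OF assms(3)[OF a1]] jc jd by simp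
    then have cd: "c = d"
      using smult_cancel[OF assms(3)[OF a1] kalg_simps(1)[OF assms(3)[OF a1]] assms(4)[OF a1] jc(2) jd(2)] by simp
    have "h j = h j'"
    proof (rule PiE_ext[OF hPi[OF jc(1)] hPi[OF jd(1)]])
      fix \<beta> assume b: "\<beta> \<in> A"
      show "h j \<beta> = h j' \<beta>"
        using eqa[OF b] cd kalg_simps(6)[OF assms(3)[OF b] hPa[OF jc(1) b] hPa[OF jd(1) b]]
          kalg_simps(1,3)[OF assms(3)[OF b]] jd by simp
    qed
    then have "j = j'" using inj_onD[OF bij_betw_imp_inj_on[OF hbij] _ jc(1) jd(1)] by simp
    then show "x = y" using jc jd cd by simp
  qed
  have Phiim: "\<Phi> ` carrier R = carrier (R_alg K A Rs)"
  proof
    show "\<Phi> ` carrier R \<subseteq> carrier (R_alg K A Rs)" using Phi_in by blast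
    show "carrier (R_alg K A Rs) \<subseteq> \<Phi> ` carrier R"
    proof
      fix z assume "z \<in> carrier (R_alg K A Rs)"
      then obtain f c where f: "f \<in> ?I" "c \<in> carrier K" "z = f \<oplus>\<^bsub>?P\<^esub> c \<odot>\<^bsub>?P\<^esub> \<one>\<^bsub>?P\<^esub>"
        unfolding RAc by blast
      obtain j where j: "j \<in> J" "f = h j" using f(1) bij_betw_imp_surj_on[OF hbij] by blast
      have "z = \<Phi> (j \<oplus>\<^bsub>R\<^esub> c \<odot>\<^bsub>R\<^esub> \<one>\<^bsub>R\<^esub>)" using Phidec[OF j(1) f(2)] f j by simp
      moreover have "j \<oplus>\<^bsub>R\<^esub> c \<odot>\<^bsub>R\<^esub> \<one>\<^bsub>R\<^esub> \<in> carrier R" using Jc[OF j(1)] f(2) by simp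
      ultimately show "z \<in> \<Phi> ` carrier R" by blast
    qed
  qed
  have "\<Phi> \<in> alg_iso K R (R_alg K A Rs)"
    unfolding alg_iso_def ring_iso_def ring_hom_def bij_betw_def
    using Phi_in Phimul Phiadd Phism Phione Phiinj Phiim RAm RAa RAo RAs by auto
  then show ?thesis by blast
qed

end
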